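(* Let $g:\mathbb{R}^n\to\mathbb{R}$ be a convex function and let $\mathcal{S}=\{x\in\mathbb{R}^n : g(x)\le 0\}$. Let $f_d:\mathbb{R}^n\to\mathbb{R}^n$ be continuously differentiable and consider the discrete system $x_{k+1}=f_d(x_k)$. Assume that there exists $x^0\in\mathbb{R}^n$ with $g(x^0)<0$, and that the function $x\mapsto g(f_d(x))$ is concave. Then $\mathcal{S}$ is an invariant set for this discrete system if and only if there exists $\alpha\ge 0$ such that $$\alpha g(x)-g(f_d(x))\ge 0\quad\text{for all } x\in\mathbb{R}^n.$$ Moreover, if $g$ and $x\mapsto g(f_d(x))$ are quadratic functions, then the same equivalence holds without the assumption that $x\mapsto g(f_d(x))$ is concave.
   Context: A set $\mathcal{S}\subseteq\mathbb{R}^n$ is an invariant set for the discrete system $x_{k+1}=f_d(x_k)$ if $x_k\in\mathcal{S}$ implies $x_{k+1}\in\mathcal{S}$ for all $k\in\mathbb{N}$. *)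

theory Defs
  imports "HOL-Analysis.Analysis"
begin

definition cont_diff_everywhere :: "(real^'n \<Rightarrow> real^'n) \<Rightarrow> bool" where
  "cont_diff_everywhere f \<longleftrightarrow>
     (\<exists>f' :: real^'n \<Rightarrow> ((real^'n) \<Rightarrow>\<^sub>L (real^'n)).
        (\<forall>x. (f has_derivative blinfun_apply (f' x)) (at x)) \<and> continuous_on UNIV f')"

definition invariant_set_discrete :: "('a \<Rightarrow> 'a) \<Rightarrow> 'a set \<Rightarrow> bool" where
  "invariant_set_discrete fd S \<longleftrightarrow>
     (\<forall>xs :: nat \<Rightarrow> 'a. (\<forall>k. xs (Suc k) = fd (xs k)) \<longrightarrow>
        (\<forall>k. xs k \<in> S \<longrightarrow> xs (Suc k) \<in> S))"

definition quadratic_fun :: "(real^'n \<Rightarrow> real) \<Rightarrow> bool" where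
  "quadratic_fun q \<longleftrightarrow>
     (\<exists>(A :: real^'n^'n) (b :: real^'n) (c :: real). \<forall>x. q x = x \<bullet> (A *v x) + b \<bullet> x + c)"

end

theory Submission
  imports Defs
begin

lemma inv_iff:
  "invariant_set_discrete fd {x. g x \<le> (0::real)} \<longleftrightarrow> (\<forall>x. g x \<le> 0 \<longrightarrow> g (fd x) \<le> 0)"
proof
  assume H: "invariant_set_discrete fd {x. g x \<le> (0::real)}"
  show "\<forall>x. g x \<le> 0 \<longrightarrow> g (fd x) \<le> 0"
  proof (intro allI impI)
    fix x assume "g x \<le> 0"
    define xs where "xs = (\<lambda>k. (fd ^^ k) x)"
    have "\<forall>k. xs (Suc k) = fd (xs k)" by (simp add: xs_def)
    with H \<open>g x \<le> 0\<close> have "xs (Suc 0) \<in> {x. g x \<le> 0}"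
      unfolding invariant_set_discrete_def by (metis funpow_0 mem_Collect_eq xs_def)
    then show "g (fd x) \<le> 0" by (simp add: xs_def)
  qed
next
  assume "\<forall>x. g x \<le> 0 \<longrightarrow> g (fd x) \<le> 0"
  then show "invariant_set_discrete fd {x. g x \<le> (0::real)}"
    unfolding invariant_set_discrete_def by auto
qed

lemma lemA:
  fixes G F :: "'a \<Rightarrow> real"
  assumes x0: "G x0 < 0" and S: "\<forall>x. G x \<le> 0 \<longrightarrow> F x \<ge> 0"
    and P: "\<And>x y. G x > 0 \<Longrightarrow> G y < 0 \<Longrightarrow> F x * (- G y) + F y * G x \<ge> 0"
  shows "\<exists>l\<ge>0. \<forall>x. F x + l * G x \<ge> 0"
proof (cases "\<exists>x. G x > 0")
  case False
  then show ?thesis using S by (intro exI[of _ 0]) (auto simp: not_less)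
next
  case True
  define T where "T = {- F x / G x | x. G x > 0}"
  have ne: "T \<noteq> {}" using True by (auto simp: T_def)
  have key: "- F x / G x \<le> F y / (- G y)" if "G x > 0" "G y < 0" for x y
    using P[OF that] that by (simp add: divide_simps)
  have bdd: "bdd_above T" unfolding T_def bdd_above_def
    using key[OF _ x0] by blast
  define l where "l = max 0 (Sup T)"
  have "F x + l * G x \<ge> 0" for x
  proof -
    consider "G x > 0" | "G x = 0" | "G x < 0" by linarith
    then show ?thesis
    proof cases
      case 1
      then have "- F x / G x \<in> T" by (auto simp: T_def)
      then have "- F x / G x \<le> l" using cSup_upper[OF _ bdd] unfolding l_def by fastforce
      then show ?thesis using 1 by (simp add: divide_simps)
    next
      case 2 then show ?thesis using S by auto
    next
      case 3
      have "Sup T \<le> F x / (- G x)"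
        using ne by (rule cSup_least) (use key 3 in \<open>auto simp: T_def\<close>)
      moreover have "0 \<le> F x / (- G x)" using S 3 by (simp add: divide_nonneg_neg less_imp_le)
      ultimately have "l \<le> F x / (- G x)" by (simp add: l_def)
      then show ?thesis using 3 by (simp add: divide_simps mult.commute)
    qed
  qed
  then show ?thesis by (intro exI[of _ l]) (auto simp: l_def)
qed

lemma lemB:
  fixes a b c al be ga :: real
  assumes a: "a \<ge> 0" and P0: "c > 0" and P1: "a + b + c < 0"
    and H: "\<And>t. a*t^2 + b*t + c \<le> 0 \<Longrightarrow> al*t^2 + be*t + ga \<ge> 0"
  shows "-(a+b+c) * ga + c * (al+be+ga) \<ge> 0"
proof -
  define \<tau> where "\<tau> = c / (-(a+b))"
  have ab: "a + b < 0" using P0 P1 by linarith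
  have t0: "0 < \<tau>" and t1: "\<tau> < 1" using ab P0 P1 by (auto simp: \<tau>_def divide_simps)
  have lin: "c + \<tau> * (a + b) = 0" using ab by (simp add: \<tau>_def field_simps)
  have pt: "a*\<tau>^2 + b*\<tau> + c = a * \<tau> * (\<tau> - 1)"
    using lin by (simp add: power2_eq_square algebra_simps)
  have ptle: "a*\<tau>^2 + b*\<tau> + c \<le> 0"
    unfolding pt using a t0 t1 by (simp add: mult_nonneg_nonpos)
  have goal_eq: "-(a+b+c) * ga + c * (al+be+ga) = (-(a+b)) * ((1-\<tau>)*ga + \<tau>*(al+be+ga))"
  proof -
    have nz: "-(a+b) \<noteq> 0" using ab by simp
    have "(-(a+b)) * ((1-\<tau>)*ga + \<tau>*(al+be+ga)) = (-(a+b)) * ga + (-(a+b)) * \<tau> * (al+be)"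
      by (simp add: algebra_simps)
    also have "(-(a+b)) * \<tau> = c" using nz by (simp add: \<tau>_def)
    finally show ?thesis by (simp add: algebra_simps)
  qed
  have pos: "-(a+b) > 0" using ab by simp
  consider "al \<ge> 0" | "al < 0" "a = 0" | "al < 0" "a > 0" using a by linarith
  then show ?thesis
  proof cases
    case 1
    have q: "al*\<tau>^2 + be*\<tau> + ga \<ge> 0" using H[OF ptle] .
    have "(1-\<tau>)*ga + \<tau>*(al+be+ga) = (al*\<tau>^2 + be*\<tau> + ga) + al * \<tau> * (1 - \<tau>)"
      by (simp add: power2_eq_square algebra_simps)
    moreover have "al * \<tau> * (1 - \<tau>) \<ge> 0" using 1 t0 t1 by simp
    ultimately have "(1-\<tau>)*ga + \<tau>*(al+be+ga) \<ge> 0" using q by linarith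
    then show ?thesis unfolding goal_eq using pos by simp
  next
    case 2
    define T where "T = 1 + (\<bar>be\<bar> + \<bar>ga\<bar>) / (-al)"
    have T1: "T \<ge> 1" using 2 by (simp add: T_def divide_nonneg_neg)
    have "a*T^2 + b*T + c \<le> 0"
    proof -
      have "b * T \<le> b * 1" using T1 ab 2 by (simp add: mult_left_mono_neg)
      then show ?thesis using 2 P1 by simp
    qed
    from H[OF this] have qT: "al*T^2 + be*T + ga \<ge> 0" .
    have "be*T \<le> \<bar>be\<bar>*T" using T1 by (simp add: mult_right_mono)
    moreover have "ga \<le> \<bar>ga\<bar>*T"
    proof -
      have "\<bar>ga\<bar> * 1 \<le> \<bar>ga\<bar>*T" using T1 by (intro mult_left_mono) auto
      then show ?thesis by simp
    qed
    moreover have e1: "al*T^2 + \<bar>be\<bar>*T + \<bar>ga\<bar>*T = T * (al * T + \<bar>be\<bar> + \<bar>ga\<bar>)"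
      by (simp add: power2_eq_square algebra_simps)
    moreover have e2: "al * T + \<bar>be\<bar> + \<bar>ga\<bar> = al"
      using 2 by (simp add: T_def field_simps)
    moreover have "T * al < 0" using T1 2 by (simp add: mult_pos_neg)
    ultimately have False using qT by (simp only: e2; linarith)
    then show ?thesis ..
  next
    case 3
    define \<mu> where "\<mu> = - al / a"
    define R where "R = (\<lambda>t. (be + \<mu>*b) * t + (ga + \<mu>*c))"
    have Rq: "R t = (al*t^2 + be*t + ga) + \<mu> * (a*t^2 + b*t + c)" for t
      using 3 by (simp add: R_def \<mu>_def field_simps power2_eq_square)
    have cont: "continuous_on S (\<lambda>t. a*t^2 + b*t + c)" for S
      by (intro continuous_intros)
    obtain t1 where t1: "0 \<le> t1" "t1 \<le> \<tau>" "a*t1^2 + b*t1 + c = 0"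
      using IVT2'[of "\<lambda>t. a*t^2 + b*t + c" \<tau> 0 0, OF ptle _ _ cont] P0 t0 by auto
    define T where "T = 1 + (\<bar>b\<bar> + \<bar>c\<bar>) / a"
    have T1: "T \<ge> 1" using 3 by (simp add: T_def divide_nonneg_pos)
    have pT: "a*T^2 + b*T + c \<ge> 0"
    proof -
      have "0 \<le> (b + \<bar>b\<bar>) * T" using T1 by (intro mult_nonneg_nonneg) auto
      then have "b*T \<ge> -\<bar>b\<bar>*T" by (simp add: algebra_simps)
      moreover have "c \<ge> -\<bar>c\<bar>*T"
      proof -
        have "\<bar>c\<bar> * 1 \<le> \<bar>c\<bar>*T" using T1 by (intro mult_left_mono) auto
        then show ?thesis by simp
      qed
      moreover have "a*T^2 - \<bar>b\<bar>*T - \<bar>c\<bar>*T = T * (a * T - \<bar>b\<bar> - \<bar>c\<bar>)"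
        by (simp add: power2_eq_square algebra_simps)
      moreover have e2: "a * T - \<bar>b\<bar> - \<bar>c\<bar> = a"
        using 3 by (simp add: T_def field_simps)
      moreover have "T * a > 0" using T1 3 by simp
      ultimately show ?thesis by (simp only: e2; linarith)
    qed
    obtain t2 where t2: "\<tau> \<le> t2" "t2 \<le> T" "a*t2^2 + b*t2 + c = 0"
      using \<open>\<tau> < 1\<close> IVT'[of "\<lambda>t. a*t^2 + b*t + c" \<tau> 0 T, OF ptle pT _ cont] t1 T1 by auto
    have R1: "R t1 \<ge> 0" using Rq[of t1] H[of t1] t1 by simp
    have R2: "R t2 \<ge> 0" using Rq[of t2] H[of t2] t2 by simp
    have Rt: "R \<tau> \<ge> 0"
    proof (cases "t1 = t2")
      case True then have "\<tau> = t1" using t1 t2 by linarith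
      then show ?thesis using R1 by simp
    next
      case False
      then have lt: "t1 < t2" using t1 t2 by linarith
      have "R \<tau> * (t2 - t1) = (t2 - \<tau>) * R t1 + (\<tau> - t1) * R t2"
        by (simp add: R_def algebra_simps)
      moreover have "(t2 - \<tau>) * R t1 + (\<tau> - t1) * R t2 \<ge> 0"
        using R1 R2 t1 t2 by simp
      ultimately have "R \<tau> * (t2 - t1) \<ge> 0" by simp
      then show ?thesis using lt by (simp add: zero_le_mult_iff)
    qed
    have "(1-\<tau>)*ga + \<tau>*(al+be+ga) = R \<tau> - \<mu> * ((1-\<tau>)*c + \<tau>*(a+b+c))"
      using 3 by (simp add: R_def algebra_simps \<mu>_def)
    moreover have "(1-\<tau>)*c + \<tau>*(a+b+c) = 0" using lin by (simp add: algebra_simps)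
    ultimately have "(1-\<tau>)*ga + \<tau>*(al+be+ga) \<ge> 0" using Rt by simp
    then show ?thesis unfolding goal_eq using pos by simp
  qed
qed

lemma quad_line:
  fixes A :: "real^'n^'n"
  assumes "\<forall>x. q x = x \<bullet> (A *v x) + b \<bullet> x + c"
  shows "q (x + t *\<^sub>R d) = (d \<bullet> (A *v d)) * t^2 + (x \<bullet> (A *v d) + d \<bullet> (A *v x) + b \<bullet> d) * t + q x"
proof -
  have "(x + t *\<^sub>R d) \<bullet> (A *v (x + t *\<^sub>R d)) = x \<bullet> (A *v x) + t * (x \<bullet> (A *v d)) + t * (d \<bullet> (A *v x)) + t * t * (d \<bullet> (A *v d))"
    by (simp add: matrix_vector_right_distrib matrix_vector_mult_scaleR inner_add_left inner_add_right distrib_left)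
  moreover have "b \<bullet> (x + t *\<^sub>R d) = b \<bullet> x + t * (b \<bullet> d)" by (simp add: inner_add_right)
  ultimately show ?thesis using assms by (simp add: power2_eq_square inner_commute[of b] algebra_simps)
qed

lemma convex_pair:
  fixes g h :: "'a::real_vector \<Rightarrow> real"
  assumes cg: "convex_on UNIV g" and ch: "concave_on UNIV h"
    and S: "\<forall>x. g x \<le> 0 \<longrightarrow> - h x \<ge> 0"
    and gx: "g x > 0" and gy: "g y < 0"
  shows "- h x * (- g y) + - h y * g x \<ge> 0"
proof -
  define \<tau> where "\<tau> = g x / (g x - g y)"
  have d: "g x - g y > 0" using gx gy by simp
  have t0: "0 \<le> \<tau>" "\<tau> \<le> 1" using gx gy d by (auto simp: \<tau>_def divide_simps)
  have e1: "(1 - \<tau>) * (g x - g y) = - g y" using d by (simp add: \<tau>_def field_simps)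
  have e2: "\<tau> * (g x - g y) = g x" using d by (simp add: \<tau>_def field_simps)
  define z where "z = (1 - \<tau>) *\<^sub>R x + \<tau> *\<^sub>R y"
  have gz: "g z \<le> (1 - \<tau>) * g x + \<tau> * g y"
    using convex_onD[OF cg t0] by (simp add: z_def)
  have "((1 - \<tau>) * g x + \<tau> * g y) * (g x - g y) = g x * ((1 - \<tau>) * (g x - g y)) + g y * (\<tau> * (g x - g y))"
    by (simp add: algebra_simps)
  also have "\<dots> = 0" by (simp only: e1 e2) simp
  finally have "(1 - \<tau>) * g x + \<tau> * g y = 0" using d by simp
  with gz have "g z \<le> 0" by simp
  then have "h z \<le> 0" using S by auto
  moreover have "h z \<ge> (1 - \<tau>) * h x + \<tau> * h y"
    using concave_onD[OF ch t0] by (simp add: z_def)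
  ultimately have "((1 - \<tau>) * h x + \<tau> * h y) * (g x - g y) \<le> 0"
    using d by (simp add: mult_nonpos_nonneg)
  also have "((1 - \<tau>) * h x + \<tau> * h y) * (g x - g y) = h x * ((1 - \<tau>) * (g x - g y)) + h y * (\<tau> * (g x - g y))"
    by (simp add: algebra_simps)
  also have "\<dots> = - g y * h x + g x * h y" by (simp only: e1 e2) simp
  finally show ?thesis by (simp add: algebra_simps)
qed

lemma quad_pair:
  fixes g h :: "real^'n \<Rightarrow> real"
  assumes cg: "convex_on UNIV g" and qg: "quadratic_fun g" and qh: "quadratic_fun h"
    and S: "\<forall>x. g x \<le> 0 \<longrightarrow> - h x \<ge> 0"
    and gx: "g x > 0" and gy: "g y < 0"
  shows "- h x * (- g y) + - h y * g x \<ge> 0"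
proof -
  obtain A b c where A: "\<forall>x. g x = x \<bullet> (A *v x) + b \<bullet> x + c"
    using qg unfolding quadratic_fun_def by blast
  obtain A2 b2 c2 where A2: "\<forall>x. h x = x \<bullet> (A2 *v x) + b2 \<bullet> x + c2"
    using qh unfolding quadratic_fun_def by blast
  define d where "d = y - x"
  define a1 where "a1 = d \<bullet> (A *v d)"
  define b1 where "b1 = x \<bullet> (A *v d) + d \<bullet> (A *v x) + b \<bullet> d"
  define a2 where "a2 = d \<bullet> (A2 *v d)"
  define bb2 where "bb2 = x \<bullet> (A2 *v d) + d \<bullet> (A2 *v x) + b2 \<bullet> d"
  have p: "g (x + t *\<^sub>R d) = a1 * t^2 + b1 * t + g x" for t
    unfolding a1_def b1_def by (rule quad_line[OF A])
  have q: "h (x + t *\<^sub>R d) = a2 * t^2 + bb2 * t + h x" for t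
    unfolding a2_def bb2_def by (rule quad_line[OF A2])
  have y: "x + 1 *\<^sub>R d = y" by (simp add: d_def)
  have gy': "g y = a1 + b1 + g x" using p[of 1] y by simp
  have hy': "h y = a2 + bb2 + h x" using q[of 1] y by simp
  have "g ((1 - 1/2) *\<^sub>R x + (1/2) *\<^sub>R y) \<le> (1 - 1/2) * g x + (1/2) * g y"
    by (rule convex_onD[OF cg]) auto
  moreover have "(1 - 1/2) *\<^sub>R x + (1/2::real) *\<^sub>R y = x + (1/2) *\<^sub>R d"
    unfolding d_def by (simp only: scaleR_diff_right scaleR_left_diff_distrib scaleR_one) (simp add: algebra_simps)
  ultimately have "a1 * (1/2)^2 + b1 * (1/2) + g x \<le> (1/2) * g x + (1/2) * g y"
    using p[of "1/2"] by simp
  then have a1: "a1 \<ge> 0" using gy' by (simp add: power2_eq_square field_simps)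
  have H: "(-a2)*t^2 + (-bb2)*t + (- h x) \<ge> 0" if "a1*t^2 + b1*t + g x \<le> 0" for t
  proof -
    have "g (x + t *\<^sub>R d) \<le> 0" using p[of t] that by simp
    then have "- h (x + t *\<^sub>R d) \<ge> 0" using S by blast
    then show ?thesis using q[of t] by simp
  qed
  have "-(a1+b1+g x) * (- h x) + g x * ((-a2)+(-bb2)+(- h x)) \<ge> 0"
    by (rule lemB[OF a1 gx _ H]) (use gy gy' in auto)
  then show ?thesis using gy' hy' by (simp add: algebra_simps)
qed

theorem theorem6:
  fixes g :: "real^'n \<Rightarrow> real" and fd :: "real^'n \<Rightarrow> real^'n"
  assumes "convex_on UNIV g"
    and "cont_diff_everywhere fd"
    and "\<exists>x0. g x0 < 0"
  shows "(concave_on UNIV (\<lambda>x. g (fd x)) \<longrightarrow>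
            (invariant_set_discrete fd {x. g x \<le> 0} \<longleftrightarrow>
             (\<exists>\<alpha>::real. \<alpha> \<ge> 0 \<and> (\<forall>x. \<alpha> * g x - g (fd x) \<ge> 0))))
       \<and> (quadratic_fun g \<and> quadratic_fun (\<lambda>x. g (fd x)) \<longrightarrow>
            (invariant_set_discrete fd {x. g x \<le> 0} \<longleftrightarrow>
             (\<exists>\<alpha>::real. \<alpha> \<ge> 0 \<and> (\<forall>x. \<alpha> * g x - g (fd x) \<ge> 0))))"
proof -
  obtain x0 where x0: "g x0 < 0" using assms(3) by blast
  have easy: "(\<exists>\<alpha>::real. \<alpha> \<ge> 0 \<and> (\<forall>x. \<alpha> * g x - g (fd x) \<ge> 0)) \<Longrightarrow>
      invariant_set_discrete fd {x. g x \<le> 0}"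
    unfolding inv_iff by (metis diff_ge_0_iff_ge mult_nonneg_nonpos order.trans)
  have hard: "(\<exists>\<alpha>::real. \<alpha> \<ge> 0 \<and> (\<forall>x. \<alpha> * g x - g (fd x) \<ge> 0))"
    if inv: "invariant_set_discrete fd {x. g x \<le> 0}"
      and P: "\<And>x y. \<forall>x. g x \<le> 0 \<longrightarrow> - g (fd x) \<ge> 0 \<Longrightarrow> g x > 0 \<Longrightarrow> g y < 0 \<Longrightarrow>
               - g (fd x) * (- g y) + - g (fd y) * g x \<ge> 0"
  proof -
    have S: "\<forall>x. g x \<le> 0 \<longrightarrow> - g (fd x) \<ge> 0" using inv unfolding inv_iff by auto
    obtain l where "l \<ge> 0" "\<forall>x. - g (fd x) + l * g x \<ge> 0"
      using lemA[of g x0 "\<lambda>x. - g (fd x)", OF x0 S P[OF S]] by blast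
    then show ?thesis by (intro exI[of _ l]) auto
  qed
  show ?thesis
  proof (intro conjI impI iffI)
    assume c: "concave_on UNIV (\<lambda>x. g (fd x))"
    fix inv assume "invariant_set_discrete fd {x. g x \<le> 0}"
    then show "\<exists>\<alpha>::real. \<alpha> \<ge> 0 \<and> (\<forall>x. \<alpha> * g x - g (fd x) \<ge> 0)"
      by (rule hard) (rule convex_pair[OF assms(1) c])
  next
    assume c: "quadratic_fun g \<and> quadratic_fun (\<lambda>x. g (fd x))"
    assume "invariant_set_discrete fd {x. g x \<le> 0}"
    then show "\<exists>\<alpha>::real. \<alpha> \<ge> 0 \<and> (\<forall>x. \<alpha> * g x - g (fd x) \<ge> 0)"
      by (rule hard) (rule quad_pair[OF assms(1) conjunct1[OF c] conjunct2[OF c]])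
  qed (use easy in auto)
qed

end
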